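(* Let $M$ be a matroid and let $M^{\mathrm{fin}}$ be its finitarization. Suppose $F$ is a base of $M^{\mathrm{fin}}$ and $B_1$, $B_2$ are bases of $M$ with $B_1\subseteq F$ and $B_2\subseteq F$. Then $|F\setminus B_1|=|F\setminus B_2|$, where all infinite cardinalities are regarded as equal.
   Context: A matroid $M=(E,\mathcal{L})$ consists of a (possibly infinite) set $E$ and a family $\mathcal{L}\subseteq 2^E$ of independent sets such that: (I1) $\emptyset\in\mathcal{L}$; (I2) subsets of independent sets are independent; (I3) if $B$ is a maximal element of $\mathcal{L}$ and $A\in\mathcal{L}$ is not maximal, there is $b\in B\setminus A$ with $A\cup\{b\}\in\mathcal{L}$; (I4) if $A\in\mathcal{L}$ and $A\subseteq X\subseteq E$, then $\{S\in\mathcal{L}: A\subseteq S\subseteq X\}$ has a maximal element (w.r.t. inclusion). Bases are the maximal independent sets. The finitarization of $M$ is $M^{\mathrm{fin}}=(E,\mathcal{L}^{\mathrm{fin}})$, where $\mathcal{L}^{\mathrm{fin}}$ consists of all $S\subseteq E$ every finite subset of which lies in $\mathcal{L}$; $M^{\mathrm{fin}}$ is a matroid. Convention: in comparing cardinalities, all infinite cardinalities are treated as a single value $\infty$. *)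

theory Defs
  imports Main "HOL-Library.Extended_Nat"
begin

definition is_base :: "'a set set \<Rightarrow> 'a set \<Rightarrow> bool" where
  "is_base L B \<longleftrightarrow> B \<in> L \<and> (\<forall>S\<in>L. B \<subseteq> S \<longrightarrow> S = B)"

definition matroid :: "'a set \<Rightarrow> 'a set set \<Rightarrow> bool" where
  "matroid E L \<longleftrightarrow>
     (\<forall>S\<in>L. S \<subseteq> E) \<and>
     {} \<in> L \<and>
     (\<forall>A B. A \<in> L \<longrightarrow> B \<subseteq> A \<longrightarrow> B \<in> L) \<and>
     (\<forall>A B. is_base L B \<longrightarrow> A \<in> L \<longrightarrow> \<not> is_base L A \<longrightarrow>
        (\<exists>b\<in>B - A. insert b A \<in> L)) \<and>
     (\<forall>A X. A \<in> L \<longrightarrow> A \<subseteq> X \<longrightarrow> X \<subseteq> E \<longrightarrow>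
        (\<exists>M\<in>{S\<in>L. A \<subseteq> S \<and> S \<subseteq> X}. \<forall>S\<in>{S\<in>L. A \<subseteq> S \<and> S \<subseteq> X}. M \<subseteq> S \<longrightarrow> S = M))"

definition fin_indep :: "'a set \<Rightarrow> 'a set set \<Rightarrow> 'a set set" where
  "fin_indep E L = {S. S \<subseteq> E \<and> (\<forall>T. T \<subseteq> S \<longrightarrow> finite T \<longrightarrow> T \<in> L)}"

definition ecard :: "'a set \<Rightarrow> enat" where
  "ecard X = (if finite X then enat (card X) else \<infinity>)"

end

theory Submission
  imports Defs
begin

lemma exch_card:
  assumes m: "matroid E L"
  shows "\<And>B1 B2. is_base L B1 \<Longrightarrow> is_base L B2 \<Longrightarrow> finite (B2 - B1) \<Longrightarrow> card (B2 - B1) = n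
     \<Longrightarrow> finite (B1 - B2) \<and> card (B1 - B2) = n"
proof (induction n)
  case 0
  then have "B2 \<subseteq> B1" by auto
  with 0 have "B2 = B1" unfolding is_base_def by blast
  then show ?case by simp
next
  case (Suc n)
  have sub: "\<forall>A B. A \<in> L \<longrightarrow> B \<subseteq> A \<longrightarrow> B \<in> L" using m unfolding matroid_def by blast
  have ex: "\<forall>A B. is_base L B \<longrightarrow> A \<in> L \<longrightarrow> \<not> is_base L A \<longrightarrow> (\<exists>b\<in>B - A. insert b A \<in> L)"
    using m unfolding matroid_def by blast
  have B1L: "B1 \<in> L" and B2L: "B2 \<in> L" using Suc.prems unfolding is_base_def by auto
  have "B2 - B1 \<noteq> {}" using Suc.prems(4) by (metis card.empty nat.distinct(1))
  have "\<not> B1 \<subseteq> B2"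
  proof
    assume "B1 \<subseteq> B2"
    then have "B2 = B1" using Suc.prems(1) B2L unfolding is_base_def by blast
    with \<open>B2 - B1 \<noteq> {}\<close> show False by simp
  qed
  then obtain x where x: "x \<in> B1" "x \<notin> B2" by auto
  have A: "B1 - {x} \<in> L" using sub B1L by blast
  have nb: "\<not> is_base L (B1 - {x})"
    using B1L x unfolding is_base_def by blast
  obtain b where b: "b \<in> B2 - (B1 - {x})" "insert b (B1 - {x}) \<in> L"
    using ex Suc.prems(2) A nb by blast
  have bx: "b \<noteq> x" using b x by auto
  have bB: "b \<in> B2 - B1" using b bx by auto
  define B1' where "B1' = insert b (B1 - {x})"
  have B1'L: "B1' \<in> L" using b B1'_def by simp
  have base': "is_base L B1'"
  proof (rule ccontr)
    assume "\<not> is_base L B1'"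
    then obtain c where c: "c \<in> B1 - B1'" "insert c B1' \<in> L" using ex Suc.prems(1) B1'L by blast
    then have "c = x" unfolding B1'_def by auto
    then have "insert b B1 \<in> L" using c(2) x unfolding B1'_def by (simp add: insert_absorb insert_commute)
    moreover have "B1 \<subseteq> insert b B1" by auto
    ultimately have "insert b B1 = B1" using Suc.prems(1) unfolding is_base_def by blast
    with bB show False by auto
  qed
  have e1: "B2 - B1' = (B2 - B1) - {b}" unfolding B1'_def using x by auto
  have f1: "finite (B2 - B1')" using e1 Suc.prems by simp
  have c1: "card (B2 - B1') = n" using e1 Suc.prems bB by simp
  from Suc.IH[OF base' Suc.prems(2) f1 c1] have ih: "finite (B1' - B2)" "card (B1' - B2) = n" by auto
  have e2: "B1 - B2 = insert x (B1' - B2)" unfolding B1'_def using x bB by auto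
  have "x \<notin> B1' - B2" unfolding B1'_def using bx by auto
  then show ?case using e2 ih by simp
qed

lemma half:
  assumes m: "matroid E L" and "is_base L B1" "is_base L B2" "B1 \<subseteq> F" "B2 \<subseteq> F"
    and fin: "finite (F - B1)"
  shows "finite (F - B2) \<and> card (F - B2) = card (F - B1)"
proof -
  have f21: "finite (B2 - B1)" using fin assms(5) by (meson Diff_mono finite_subset order_refl)
  from exch_card[OF m assms(2,3) f21 refl] have h: "finite (B1 - B2)" "card (B1 - B2) = card (B2 - B1)" by auto
  define C where "C = F - B1 - B2"
  have fC: "finite C" using fin C_def by auto
  have e1: "F - B1 = C \<union> (B2 - B1)" using assms(5) C_def by auto
  have e2: "F - B2 = C \<union> (B1 - B2)" using assms(4) C_def by auto
  have d1: "C \<inter> (B2 - B1) = {}" "C \<inter> (B1 - B2) = {}" using C_def by auto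
  show ?thesis using e1 e2 d1 fC h f21 by (simp add: card_Un_disjoint)
qed

theorem theorem3p1p2:
  fixes E :: "'a set" and L :: "'a set set" and F B1 B2 :: "'a set"
  assumes "matroid E L"
    and "is_base (fin_indep E L) F"
    and "is_base L B1" and "is_base L B2"
    and "B1 \<subseteq> F" and "B2 \<subseteq> F"
  shows "ecard (F - B1) = ecard (F - B2)"
proof (cases "finite (F - B1)")
  case True
  then show ?thesis using half[OF assms(1,3,4,5,6)] unfolding ecard_def by simp
next
  case False
  then have "\<not> finite (F - B2)" using half[OF assms(1,4,3,6,5)] by auto
  then show ?thesis using False unfolding ecard_def by simp
qed

end
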